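(* Let $n\in\mathbb{N}^*$. Then, almost surely, $$\sup_{f}\ \Big|\mathbb{E}\big[f(Z)\mid\overline Z^{1:\infty}\big]-\mathbb{E}_{\overline Z^n}(f)\Big| \;=\;\sup_{f\in\mathcal L,\ \|f\|_{\mathcal L}\le1}\Big|\mathbb{E}[f(Z)]-\mathbb{E}_{\overline Z^n}(f)\Big|,$$ where the supremum on the left is over all $\overline Z^{1:\infty}$-measurable random functions $f$ such that $\|f\|_{\mathcal L}\le1$ almost surely.
   Context: $Z$ is an $\mathbb{R}^d$-valued random vector with law $\nu$. $\mathcal L$ denotes the Lipschitz functions $\mathbb{R}^d\to\mathbb{R}$ and $\|f\|_{\mathcal L}$ the Lipschitz constant. $(M_n)_{n\ge1}$ are positive integers; $\overline Z^n=(Z^n_k)_{1\le k\le M_n}$ where all $Z^n_k$ ($n\ge1$, $1\le k\le M_n$) are i.i.d. with law $\nu$ and independent of $Z$; $\overline Z^{1:\infty}=(\overline Z^n)_{n\ge1}$. For a collection $\overline Z=(Z_k)_{k\le M}$, $\mathbb{E}_{\overline Z}(f)=\frac1M\sum_{k=1}^Mf(Z_k)$. *)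

theory Defs
  imports "HOL-Probability.Probability"
begin

definition is_ess_sup :: "'a measure \<Rightarrow> ('a \<Rightarrow> real) set \<Rightarrow> ('a \<Rightarrow> real) \<Rightarrow> bool" where
  "is_ess_sup M XX Y \<longleftrightarrow>
     Y \<in> borel_measurable M \<and>
     (\<forall>X\<in>XX. AE \<omega> in M. X \<omega> \<le> Y \<omega>) \<and>
     (\<forall>Y'\<in>borel_measurable M. (\<forall>X\<in>XX. AE \<omega> in M. X \<omega> \<le> Y' \<omega>) \<longrightarrow> (AE \<omega> in M. Y \<omega> \<le> Y' \<omega>))"

definition emp_mean :: "(nat \<Rightarrow> nat) \<Rightarrow> (nat \<Rightarrow> nat \<Rightarrow> 'a \<Rightarrow> 'b) \<Rightarrow> nat \<Rightarrow> ('b \<Rightarrow> real) \<Rightarrow> 'a \<Rightarrow> real" where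
  "emp_mean Ms Zs n f \<omega> = (\<Sum>k=1..Ms n. f (Zs n k \<omega>)) / real (Ms n)"

end

theory Submission
  imports Defs
begin


definition dseq :: "nat \<Rightarrow> 'b::euclidean_space" where
  "dseq = from_nat_into (SOME D::'b set. countable D \<and> (\<forall>X. open X \<longrightarrow> X \<noteq> {} \<longrightarrow> (\<exists>d\<in>D. d \<in> X)))"

lemma dense_ex: "\<exists>D::'b::euclidean_space set. countable D \<and> (\<forall>X. open X \<longrightarrow> X \<noteq> {} \<longrightarrow> (\<exists>d\<in>D. d \<in> X))"
proof -
  obtain D :: "'b set" where D: "countable D" "\<And>X. open X \<Longrightarrow> X \<noteq> {} \<Longrightarrow> \<exists>d\<in>D. d \<in> X"
    by (rule countable_dense_setE) blast
  then show ?thesis by blast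
qed

lemma dseq_dense:
  fixes z :: "'b::euclidean_space"
  assumes "e > 0" shows "\<exists>i. dist (dseq i) z < e"
proof -
  let ?P = "\<lambda>D::'b set. countable D \<and> (\<forall>X. open X \<longrightarrow> X \<noteq> {} \<longrightarrow> (\<exists>d\<in>D. d \<in> X))"
  define D where "D = (SOME D. ?P D)"
  have PD: "?P D" unfolding D_def using someI_ex[OF dense_ex] .
  have "open (ball z e)" "ball z e \<noteq> {}" using assms by auto
  then obtain d where d: "d \<in> D" "d \<in> ball z e" using PD by blast
  from from_nat_into_surj[OF _ d(1)] PD obtain i where "from_nat_into D i = d" by blast
  then have "dseq i = d" unfolding dseq_def D_def by simp
  then show ?thesis using d by (auto simp: dist_commute)
qed

definition gL :: "(nat \<times> rat) list \<Rightarrow> 'b::euclidean_space \<Rightarrow> real" where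
  "gL L z = Max ((\<lambda>(i,a). real_of_rat a - dist z (dseq i)) ` set L)"

definition DD :: "('b::euclidean_space \<Rightarrow> real) set" where
  "DD = gL ` {L. L \<noteq> []}"

lemma countable_DD: "countable DD"
  unfolding DD_def by (rule countable_image) simp

lemma DD_nonempty: "DD \<noteq> {}"
  unfolding DD_def by auto

lemma Max_lipschitz:
  fixes \<phi> :: "'i \<Rightarrow> 'b::metric_space \<Rightarrow> real"
  assumes "finite A" "A \<noteq> {}" "\<And>a. a \<in> A \<Longrightarrow> lipschitz_on 1 UNIV (\<phi> a)"
  shows "lipschitz_on 1 UNIV (\<lambda>z. Max ((\<lambda>a. \<phi> a z) ` A))"
proof (rule lipschitz_onI)
  have key: "Max ((\<lambda>a. \<phi> a z) ` A) \<le> Max ((\<lambda>a. \<phi> a w) ` A) + dist z w" for z w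
  proof -
    have "\<phi> a z \<le> Max ((\<lambda>a. \<phi> a w) ` A) + dist z w" if "a \<in> A" for a
    proof -
      have "\<phi> a z - \<phi> a w \<le> 1 * dist z w"
        using lipschitz_onD[OF assms(3)[OF that], of z w] by (simp add: dist_real_def)
      moreover have "\<phi> a w \<le> Max ((\<lambda>a. \<phi> a w) ` A)" using assms that by auto
      ultimately show ?thesis by simp
    qed
    then show ?thesis using assms by (subst Max_le_iff) auto
  qed
  fix x y :: 'b
  show "dist (Max ((\<lambda>a. \<phi> a x) ` A)) (Max ((\<lambda>a. \<phi> a y) ` A)) \<le> 1 * dist x y"
    using key[of x y] key[of y x] by (simp add: dist_real_def dist_commute abs_le_iff)
qed simp

lemma gL_lipschitz:
  assumes "L \<noteq> []" shows "lipschitz_on 1 UNIV (gL L)"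
proof -
  have "lipschitz_on 1 UNIV (\<lambda>z. Max ((\<lambda>p. (\<lambda>(i,a). real_of_rat a - dist z (dseq i)) p) ` set L))"
  proof (rule Max_lipschitz)
    fix p assume "p \<in> set L"
    obtain i a where p: "p = (i,a)" by force
    show "lipschitz_on 1 UNIV (\<lambda>z. case p of (i, a) \<Rightarrow> real_of_rat a - dist z (dseq i))"
    proof -
      have "dist (real_of_rat a - dist x (dseq i)) (real_of_rat a - dist y (dseq i)) \<le> 1 * dist x y" for x y
        using abs_dist_diff_le[of x "dseq i" y] by (simp add: dist_real_def dist_commute abs_minus_commute)
      then show ?thesis unfolding p by (intro lipschitz_onI) auto
    qed
  qed (use assms in auto)
  then show ?thesis unfolding gL_def[abs_def] by simp
qed

lemma DD_lip: "f \<in> DD \<Longrightarrow> lipschitz_on 1 UNIV f"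
  unfolding DD_def using gL_lipschitz by auto

lemma lip_approx:
  fixes f :: "'b::euclidean_space \<Rightarrow> real"
  assumes lf: "lipschitz_on 1 UNIV f"
  shows "\<exists>g. (\<forall>j. g j \<in> DD) \<and> (\<forall>z. (\<lambda>j. g j z) \<longlonglongrightarrow> f z)
          \<and> (\<forall>j z. \<bar>g j z - f z\<bar> \<le> 2 * norm z + (2 * norm (dseq 0 :: 'b) + 1))"
proof -
  have fl: "\<bar>f x - f y\<bar> \<le> dist x y" for x y
    using lipschitz_onD[OF lf, of x y] by (simp add: dist_real_def)
  have "\<forall>i j. \<exists>r::rat. \<bar>real_of_rat r - f (dseq i)\<bar> < 1 / (real j + 1)"
  proof (intro allI)
    fix i j
    have "f (dseq i) < f (dseq i) + 1 / (real j + 1)" by simp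
    from of_rat_dense[OF this] obtain r where
      "f (dseq i) < real_of_rat r" "real_of_rat r < f (dseq i) + 1 / (real j + 1)" by blast
    then show "\<exists>r::rat. \<bar>real_of_rat r - f (dseq i)\<bar> < 1 / (real j + 1)" by (intro exI[of _ r]) auto
  qed
  then obtain r where r: "\<And>i j. \<bar>real_of_rat (r i j) - f (dseq i)\<bar> < 1 / (real j + 1)" by metis
  define g :: "nat \<Rightarrow> 'b \<Rightarrow> real" where "g j = gL (map (\<lambda>i. (i, r i j)) [0..<Suc j])" for j
  have geq: "g j z = Max ((\<lambda>i. real_of_rat (r i j) - dist z (dseq i)) ` {0..<Suc j})" for j z
    unfolding g_def gL_def by (simp add: image_image del: upt_Suc)
  have up: "g j z \<le> f z + 1 / (real j + 1)" for j z
    unfolding geq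
  proof (rule Max.boundedI, simp, simp, clarify)
    fix i assume "i \<in> {0..<Suc j}"
    have "f (dseq i) \<le> f z + dist z (dseq i)" using fl[of "dseq i" z] by (simp add: dist_commute)
    then show "real_of_rat (r i j) - dist z (dseq i) \<le> f z + 1 / (real j + 1)"
      using r[of i j] by linarith
  qed
  have low: "g j z \<ge> f z - 2 * dist z (dseq i) - 1 / (real j + 1)" if "i \<le> j" for i j z
  proof -
    have "real_of_rat (r i j) - dist z (dseq i) \<le> g j z"
      unfolding geq using that by (intro Max_ge) auto
    moreover have "f z \<le> f (dseq i) + dist z (dseq i)" using fl[of z "dseq i"] by simp
    ultimately show ?thesis using r[of i j] by simp
  qed
  have "\<bar>g j z - f z\<bar> \<le> 2 * norm z + (2 * norm (dseq 0 :: 'b) + 1)" for j z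
  proof -
    have "1 / (real j + 1) \<le> 1" by (simp add: field_simps)
    moreover have "dist z (dseq 0) \<le> norm z + norm (dseq 0 :: 'b)"
      by (simp add: dist_norm norm_triangle_ineq4)
    ultimately show ?thesis using up[of j z] low[of 0 j z, OF le0] norm_ge_zero[of z] norm_ge_zero[of "dseq 0 :: 'b"] divide_nonneg_nonneg[of 1 "real j + 1"] unfolding abs_le_iff by linarith
  qed
  moreover have "(\<lambda>j. g j z) \<longlonglongrightarrow> f z" for z
  proof (rule LIMSEQ_I)
    fix e :: real assume e: "e > 0"
    obtain i where i: "dist (dseq i) z < e / 4" using dseq_dense[of "e/4" z] e by auto
    obtain N :: nat where N0: "4 / e < real N" using reals_Archimedean2 by blast
    have N: "1 / (real N + 1) < e / 4"
    proof -
      have "4 < e * real N" using N0 e by (simp add: field_simps)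
      then have "4 < e * (real N + 1)" using e by (simp add: distrib_left)
      then show ?thesis using e by (simp add: field_simps)
    qed
    show "\<exists>no. \<forall>j\<ge>no. norm (g j z - f z) < e"
    proof (intro exI[of _ "max i N"] allI impI)
      fix j assume j: "max i N \<le> j"
      have "1 / (real j + 1) \<le> 1 / (real N + 1)" using j by (intro divide_left_mono) auto
      then show "norm (g j z - f z) < e"
        using up[of j z] low[of i j z] j i N by (simp add: dist_commute)
    qed
  qed
  moreover have "g j \<in> DD" for j unfolding DD_def g_def by auto
  ultimately show ?thesis by blast
qed



lemma indep_G:
  fixes P :: "'a measure" and Z :: "'a \<Rightarrow> 'b::euclidean_space"
    and Zs :: "nat \<Rightarrow> nat \<Rightarrow> 'a \<Rightarrow> 'b" and S :: "(nat \<times> nat) set"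
  assumes P: "prob_space P"
    and iv: "prob_space.indep_vars P (\<lambda>_. borel)
           (\<lambda>i. case i of None \<Rightarrow> Z | Some (m, k) \<Rightarrow> Zs m k) ({None} \<union> Some ` S)"
    and G: "G = sigma (space P) (\<Union>(m, k)\<in>S. {Zs m k -` A \<inter> space P | A. A \<in> sets borel})"
  shows "subalgebra P G"
    and "\<forall>A\<in>sets G. \<forall>B\<in>sets borel. measure P (A \<inter> (Z -` B \<inter> space P)) = measure P A * measure P (Z -` B \<inter> space P)"
proof -
  interpret prob_space P by fact
  define X where "X = (\<lambda>i. case i of None \<Rightarrow> Z | Some (m, k) \<Rightarrow> Zs m k)"
  define E where "E = (\<lambda>i. {X i -` A \<inter> space P | A. A \<in> sets (borel :: 'b measure)})"
  from iv have rv: "\<And>i. i \<in> {None} \<union> Some ` S \<Longrightarrow> X i \<in> borel_measurable P"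
    and ind: "indep_sets E ({None} \<union> Some ` S)"
    unfolding indep_vars_def2 X_def E_def by auto
  define GEN where "GEN = (\<Union>(m, k)\<in>S. {Zs m k -` A \<inter> space P | A. A \<in> sets (borel :: 'b measure)})"
  have GENeq: "GEN = (\<Union>i\<in>Some ` S. E i)"
  proof (intro equalityI subsetI)
    fix a assume "a \<in> GEN"
    then obtain m k A where "(m,k)\<in>S" "A\<in>sets borel" "a = Zs m k -` A \<inter> space P"
      unfolding GEN_def by auto
    then show "a \<in> (\<Union>i\<in>Some ` S. E i)" unfolding E_def X_def by (intro UN_I[of "Some (m,k)"]) auto
  next
    fix a assume "a \<in> (\<Union>i\<in>Some ` S. E i)"
    then show "a \<in> GEN" unfolding E_def X_def GEN_def by auto
  qed
  have GEN_sets: "GEN \<subseteq> sets P"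
  proof
    fix a assume "a \<in> GEN"
    then obtain i where i: "i \<in> Some ` S" "a \<in> E i" unfolding GENeq by auto
    then obtain A where "a = X i -` A \<inter> space P" "A \<in> sets borel" unfolding E_def by auto
    then show "a \<in> sets P" using rv[of i] i by (auto intro: measurable_sets)
  qed
  have GEN_pow: "GEN \<subseteq> Pow (space P)" unfolding GEN_def by auto
  have spG: "space G = space P" unfolding G GEN_def[symmetric] using GEN_pow by (simp add: space_measure_of_conv)
  have setsG: "sets G = sigma_sets (space P) GEN" unfolding G GEN_def[symmetric] using GEN_pow by simp
  have "sets G \<subseteq> sets P" unfolding setsG using GEN_sets by (simp add: sets.sigma_sets_subset)
  then show "subalgebra P G" unfolding subalgebra_def using spG by simp
  have stab: "Int_stable (E i)" for i
  proof (rule Int_stableI)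
    fix a b assume "a \<in> E i" "b \<in> E i"
    then obtain A B where "a = X i -` A \<inter> space P" "A \<in> sets borel" "b = X i -` B \<inter> space P" "B \<in> sets borel"
      unfolding E_def by auto
    then show "a \<inter> b \<in> E i" unfolding E_def by (intro CollectI exI[of _ "A \<inter> B"]) auto
  qed
  define I' where "I' = (\<lambda>b::bool. if b then {None} else Some ` S)"
  have U: "(\<Union>j\<in>UNIV. I' j) = {None} \<union> Some ` S" unfolding I'_def by (auto simp: UNIV_bool)
  have ind2: "indep_sets (\<lambda>j. sigma_sets (space P) (\<Union>i\<in>I' j. E i)) UNIV"
  proof (rule indep_sets_collect_sigma)
    show "indep_sets E (\<Union>j\<in>UNIV. I' j)" unfolding U by (rule ind)
    show "disjoint_family_on I' UNIV" unfolding disjoint_family_on_def I'_def by auto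
  qed (rule stab)
  show "\<forall>A\<in>sets G. \<forall>B\<in>sets borel. measure P (A \<inter> (Z -` B \<inter> space P)) = measure P A * measure P (Z -` B \<inter> space P)"
  proof (intro ballI)
    fix A B assume A: "A \<in> sets G" and B: "B \<in> sets (borel :: 'b measure)"
    define AA where "AA = (\<lambda>j::bool. if j then Z -` B \<inter> space P else A)"
    have mem: "\<forall>j\<in>UNIV. AA j \<in> sigma_sets (space P) (\<Union>i\<in>I' j. E i)"
    proof
      fix j :: bool
      show "AA j \<in> sigma_sets (space P) (\<Union>i\<in>I' j. E i)"
      proof (cases j)
        case True
        have "Z -` B \<inter> space P \<in> E None" unfolding E_def X_def using B by auto
        then show ?thesis using True unfolding AA_def I'_def by (auto intro: sigma_sets.Basic)
      next
        case False
        then show ?thesis using A unfolding AA_def I'_def setsG GENeq by simp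
      qed
    qed
    have "prob (\<Inter>j\<in>UNIV. AA j) = (\<Prod>j\<in>UNIV. prob (AA j))"
      by (rule indep_setsD[OF ind2]) (use mem in auto)
    then show "measure P (A \<inter> (Z -` B \<inter> space P)) = measure P A * measure P (Z -` B \<inter> space P)"
      unfolding AA_def by (simp add: UNIV_bool Int_commute mult.commute)
  qed
qed



lemma freeze_nn:
  fixes P :: "'a measure" and Z :: "'a \<Rightarrow> 'b::euclidean_space" and h :: "'a \<times> 'b \<Rightarrow> ennreal"
  assumes P: "prob_space P" and sub: "subalgebra P G" and Zm: "Z \<in> borel_measurable P"
    and ind: "\<forall>A\<in>sets G. \<forall>B\<in>sets borel. measure P (A \<inter> (Z -` B \<inter> space P)) = measure P A * measure P (Z -` B \<inter> space P)"
    and h: "h \<in> borel_measurable (G \<Otimes>\<^sub>M borel)"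
  shows "(\<integral>\<^sup>+\<omega>. h (\<omega>, Z \<omega>) \<partial>P) = (\<integral>\<^sup>+\<omega>. (\<integral>\<^sup>+z. h (\<omega>, z) \<partial>(distr P borel Z)) \<partial>P)"
proof -
  interpret prob_space P by fact
  let ?R = "restr_to_subalg P G"
  let ?\<nu> = "distr P borel Z"
  have spG: "space G = space P" and sG: "sets G \<subseteq> sets P" using sub by (auto simp: subalgebra_def)
  have idm: "(\<lambda>\<omega>. \<omega>) \<in> measurable P G"
    unfolding measurable_def using spG sG sets.sets_into_space by (auto simp: Pi_iff)
  have pm: "(\<lambda>\<omega>. (\<omega>, Z \<omega>)) \<in> measurable P (G \<Otimes>\<^sub>M borel)" using idm Zm by (rule measurable_Pair)
  have probR: "prob_space ?R" by (rule prob_space_restr_to_subalg[OF sub P])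
  have probnu: "prob_space ?\<nu>" by (rule prob_space_distr[OF Zm])
  have sfR: "sigma_finite_measure ?R" using probR by (simp add: prob_space_imp_sigma_finite)
  have sfnu: "sigma_finite_measure ?\<nu>" using probnu by (simp add: prob_space_imp_sigma_finite)
  have setsR: "sets ?R = sets G" by (rule sets_restr_to_subalg[OF sub])
  have sets_pair: "sets (?R \<Otimes>\<^sub>M ?\<nu>) = sets (G \<Otimes>\<^sub>M borel)"
    by (rule sets_pair_measure_cong[OF setsR]) simp
  have sets_pair2: "sets (G \<Otimes>\<^sub>M ?\<nu>) = sets (G \<Otimes>\<^sub>M borel)"
    by (rule sets_pair_measure_cong) simp_all
  have eq: "?R \<Otimes>\<^sub>M ?\<nu> = distr P (G \<Otimes>\<^sub>M borel) (\<lambda>\<omega>. (\<omega>, Z \<omega>))"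
  proof (rule pair_measure_eqI[OF sfR sfnu])
    show "sets (?R \<Otimes>\<^sub>M ?\<nu>) = sets (distr P (G \<Otimes>\<^sub>M borel) (\<lambda>\<omega>. (\<omega>, Z \<omega>)))"
      using sets_pair by simp
    fix A B assume A: "A \<in> sets ?R" and B: "B \<in> sets ?\<nu>"
    then have AG: "A \<in> sets G" and Bb: "B \<in> sets borel" using setsR by auto
    have AP: "A \<subseteq> space P" using sets.sets_into_space[OF AG] spG by simp
    have "emeasure (distr P (G \<Otimes>\<^sub>M borel) (\<lambda>\<omega>. (\<omega>, Z \<omega>))) (A \<times> B)
        = emeasure P ((\<lambda>\<omega>. (\<omega>, Z \<omega>)) -` (A \<times> B) \<inter> space P)"
      by (rule emeasure_distr[OF pm]) (use AG Bb in auto)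
    also have "(\<lambda>\<omega>. (\<omega>, Z \<omega>)) -` (A \<times> B) \<inter> space P = A \<inter> (Z -` B \<inter> space P)" using AP by auto
    also have "emeasure P (A \<inter> (Z -` B \<inter> space P)) = ennreal (measure P A * measure P (Z -` B \<inter> space P))"
      using ind AG Bb by (simp add: emeasure_eq_measure)
    also have "\<dots> = emeasure ?R A * emeasure ?\<nu> B"
      using AG Bb sG by (simp add: emeasure_restr_to_subalg[OF sub] emeasure_distr[OF Zm] emeasure_eq_measure ennreal_mult)
    finally show "emeasure ?R A * emeasure ?\<nu> B = emeasure (distr P (G \<Otimes>\<^sub>M borel) (\<lambda>\<omega>. (\<omega>, Z \<omega>))) (A \<times> B)" by simp
  qed
  have hR: "h \<in> borel_measurable (?R \<Otimes>\<^sub>M ?\<nu>)" by (subst measurable_cong_sets[OF sets_pair refl]) (rule h)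
  have hG: "h \<in> borel_measurable (G \<Otimes>\<^sub>M ?\<nu>)" by (subst measurable_cong_sets[OF sets_pair2 refl]) (rule h)
  have hD: "h \<in> borel_measurable (distr P (G \<Otimes>\<^sub>M borel) (\<lambda>\<omega>. (\<omega>, Z \<omega>)))"
    using h by simp
  have "(\<integral>\<^sup>+\<omega>. h (\<omega>, Z \<omega>) \<partial>P) = integral\<^sup>N (distr P (G \<Otimes>\<^sub>M borel) (\<lambda>\<omega>. (\<omega>, Z \<omega>))) h"
    by (rule nn_integral_distr[OF pm hD, symmetric])
  also have "\<dots> = integral\<^sup>N (?R \<Otimes>\<^sub>M ?\<nu>) h" by (simp add: eq)
  also have "\<dots> = (\<integral>\<^sup>+\<omega>. (\<integral>\<^sup>+z. h (\<omega>, z) \<partial>?\<nu>) \<partial>?R)"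
    by (rule sigma_finite_measure.nn_integral_fst[OF sfnu hR, symmetric])
  also have "\<dots> = (\<integral>\<^sup>+\<omega>. (\<integral>\<^sup>+z. h (\<omega>, z) \<partial>?\<nu>) \<partial>P)"
    by (rule nn_integral_subalgebra2[OF sub sigma_finite_measure.borel_measurable_nn_integral_fst[OF sfnu hG]])
  finally show ?thesis .
qed

lemma freeze_cond:
  fixes P :: "'a measure" and Z :: "'a \<Rightarrow> 'b::euclidean_space" and h :: "'a \<times> 'b \<Rightarrow> ennreal"
  assumes P: "prob_space P" and sub: "subalgebra P G" and Zm: "Z \<in> borel_measurable P"
    and ind: "\<forall>A\<in>sets G. \<forall>B\<in>sets borel. measure P (A \<inter> (Z -` B \<inter> space P)) = measure P A * measure P (Z -` B \<inter> space P)"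
    and h: "h \<in> borel_measurable (G \<Otimes>\<^sub>M borel)"
  shows "AE \<omega> in P. nn_cond_exp P G (\<lambda>\<omega>. h (\<omega>, Z \<omega>)) \<omega> = (\<integral>\<^sup>+z. h (\<omega>, z) \<partial>(distr P borel Z))"
proof -
  let ?\<nu> = "distr P borel Z"
  have spG: "space G = space P" and sG: "sets G \<subseteq> sets P" using sub by (auto simp: subalgebra_def)
  have idm: "(\<lambda>\<omega>. \<omega>) \<in> measurable P G"
    unfolding measurable_def using spG sG sets.sets_into_space by (auto simp: Pi_iff)
  have pm: "(\<lambda>\<omega>. (\<omega>, Z \<omega>)) \<in> measurable P (G \<Otimes>\<^sub>M borel)" using idm Zm by (rule measurable_Pair)
  have probR: "prob_space (restr_to_subalg P G)" by (rule prob_space_restr_to_subalg[OF sub P])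
  have sfs: "sigma_finite_subalgebra P G"
    by (rule sigma_finite_subalgebra.intro[OF sub prob_space_imp_sigma_finite[OF probR]])
  have probnu: "prob_space ?\<nu>" by (rule prob_space.prob_space_distr[OF P Zm])
  have sfnu: "sigma_finite_measure ?\<nu>" using probnu by (simp add: prob_space_imp_sigma_finite)
  have sets_pair2: "sets (G \<Otimes>\<^sub>M ?\<nu>) = sets (G \<Otimes>\<^sub>M borel)"
    by (rule sets_pair_measure_cong) simp_all
  have hG: "h \<in> borel_measurable (G \<Otimes>\<^sub>M ?\<nu>)" by (subst measurable_cong_sets[OF sets_pair2 refl]) (rule h)
  have gmeas: "(\<lambda>\<omega>. \<integral>\<^sup>+z. h (\<omega>, z) \<partial>?\<nu>) \<in> borel_measurable G"
    by (rule sigma_finite_measure.borel_measurable_nn_integral_fst[OF sfnu hG])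
  have fmeas: "(\<lambda>\<omega>. h (\<omega>, Z \<omega>)) \<in> borel_measurable P"
    using measurable_comp[OF pm h] by (simp add: comp_def)
  have "AE \<omega> in P. (\<integral>\<^sup>+z. h (\<omega>, z) \<partial>?\<nu>) = nn_cond_exp P G (\<lambda>\<omega>. h (\<omega>, Z \<omega>)) \<omega>"
  proof (rule sigma_finite_subalgebra.nn_cond_exp_charact[OF sfs _ fmeas gmeas])
    fix A assume A: "A \<in> sets G"
    have hA: "(\<lambda>x. h x * indicator A (fst x)) \<in> borel_measurable (G \<Otimes>\<^sub>M borel)"
      using h A by measurable
    have "(\<integral>\<^sup>+\<omega>. h (\<omega>, Z \<omega>) * indicator A \<omega> \<partial>P) = (\<integral>\<^sup>+\<omega>. (\<integral>\<^sup>+z. h (\<omega>, z) * indicator A \<omega> \<partial>?\<nu>) \<partial>P)"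
      using freeze_nn[OF P sub Zm ind hA] by simp
    also have "\<dots> = (\<integral>\<^sup>+\<omega>. (\<integral>\<^sup>+z. h (\<omega>, z) \<partial>?\<nu>) * indicator A \<omega> \<partial>P)"
      by (rule nn_integral_cong) (auto split: split_indicator)
    finally show "(\<integral>\<^sup>+\<omega>. h (\<omega>, Z \<omega>) * indicator A \<omega> \<partial>P) = (\<integral>\<^sup>+\<omega>. (\<integral>\<^sup>+z. h (\<omega>, z) \<partial>?\<nu>) * indicator A \<omega> \<partial>P)" .
  qed
  then show ?thesis by (auto elim: AE_mp)
qed

lemma freeze_real:
  fixes P :: "'a measure" and Z :: "'a \<Rightarrow> 'b::euclidean_space" and F :: "'a \<Rightarrow> 'b \<Rightarrow> real"
  assumes P: "prob_space P" and sub: "subalgebra P G" and Zm: "Z \<in> borel_measurable P"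
    and ind: "\<forall>A\<in>sets G. \<forall>B\<in>sets borel. measure P (A \<inter> (Z -` B \<inter> space P)) = measure P A * measure P (Z -` B \<inter> space P)"
    and Fm: "(\<lambda>(\<omega>, z). F \<omega> z) \<in> borel_measurable (G \<Otimes>\<^sub>M borel)"
  shows "AE \<omega> in P. integrable (distr P borel Z) (F \<omega>) \<longrightarrow>
           real_cond_exp P G (\<lambda>\<omega>. F \<omega> (Z \<omega>)) \<omega> = (\<integral>z. F \<omega> z \<partial>(distr P borel Z))"
proof -
  let ?\<nu> = "distr P borel Z"
  have h1: "(\<lambda>(\<omega>, z). ennreal (F \<omega> z)) \<in> borel_measurable (G \<Otimes>\<^sub>M borel)"
    using Fm by (simp add: split_beta')
  have h2: "(\<lambda>(\<omega>, z). ennreal (- F \<omega> z)) \<in> borel_measurable (G \<Otimes>\<^sub>M borel)"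
    using Fm by (simp add: split_beta')
  have 1: "AE \<omega> in P. nn_cond_exp P G (\<lambda>\<omega>. ennreal (F \<omega> (Z \<omega>))) \<omega> = (\<integral>\<^sup>+z. ennreal (F \<omega> z) \<partial>?\<nu>)"
    using freeze_cond[OF P sub Zm ind h1] by simp
  have 2: "AE \<omega> in P. nn_cond_exp P G (\<lambda>\<omega>. ennreal (- F \<omega> (Z \<omega>))) \<omega> = (\<integral>\<^sup>+z. ennreal (- F \<omega> z) \<partial>?\<nu>)"
    using freeze_cond[OF P sub Zm ind h2] by simp
  show ?thesis
    using 1 2
  proof eventually_elim
    case (elim \<omega>)
    show ?case
    proof
      assume int: "integrable ?\<nu> (F \<omega>)"
      show "real_cond_exp P G (\<lambda>\<omega>. F \<omega> (Z \<omega>)) \<omega> = (\<integral>z. F \<omega> z \<partial>?\<nu>)"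
        unfolding real_cond_exp_def real_lebesgue_integral_def[OF int] using elim by simp
    qed
  qed
qed



lemma mean_bound:
  fixes a b :: "nat \<Rightarrow> real"
  assumes M: "M > 0" and h: "\<And>k. k \<in> {1..M} \<Longrightarrow> \<bar>c - a k\<bar> \<le> e + b k"
  shows "\<bar>c - (\<Sum>k=1..M. a k) / real M\<bar> \<le> e + (\<Sum>k=1..M. b k) / real M"
proof -
  have "c - (\<Sum>k=1..M. a k) / real M = (\<Sum>k=1..M. (c - a k)) / real M"
    using M by (simp add: sum_subtractf field_simps)
  also have "\<bar>\<dots>\<bar> = \<bar>\<Sum>k=1..M. (c - a k)\<bar> / real M" using M by simp
  also have "\<dots> \<le> (\<Sum>k=1..M. (e + b k)) / real M"
  proof (rule divide_right_mono)
    have "\<bar>\<Sum>k=1..M. (c - a k)\<bar> \<le> (\<Sum>k=1..M. \<bar>c - a k\<bar>)" by (rule sum_abs)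
    also have "\<dots> \<le> (\<Sum>k=1..M. (e + b k))" by (rule sum_mono) (rule h)
    finally show "\<bar>\<Sum>k=1..M. (c - a k)\<bar> \<le> (\<Sum>k=1..M. (e + b k))" .
  qed simp
  also have "\<dots> = e + (\<Sum>k=1..M. b k) / real M"
    using M by (simp add: sum.distrib field_simps)
  finally show ?thesis .
qed

lemma lip_meas: "lipschitz_on 1 UNIV (f :: 'b::euclidean_space \<Rightarrow> real) \<Longrightarrow> f \<in> borel_measurable borel"
  by (rule borel_measurable_continuous_onI[OF lipschitz_on_continuous_on])

lemma lip_bound: "lipschitz_on 1 UNIV (f :: 'b::euclidean_space \<Rightarrow> real) \<Longrightarrow> \<bar>f x - f y\<bar> \<le> dist x y"
  using lipschitz_onD[of 1 UNIV f x y] by (simp add: dist_real_def)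

theorem lemma2:
  fixes P :: "'a measure" and Z :: "'a \<Rightarrow> 'b::euclidean_space"
    and Zs :: "nat \<Rightarrow> nat \<Rightarrow> 'a \<Rightarrow> 'b" and Ms :: "nat \<Rightarrow> nat"
    and \<nu> :: "'b measure" and n :: nat and G :: "'a measure"
  assumes "prob_space P"
    and "\<forall>m\<ge>1. Ms m > 0"
    and "distr P borel Z = \<nu>"
    and "\<forall>m\<ge>1. \<forall>k\<in>{1..Ms m}. distr P borel (Zs m k) = \<nu>"
    and "prob_space.indep_vars P (\<lambda>_. borel)
           (\<lambda>i. case i of None \<Rightarrow> Z | Some (m, k) \<Rightarrow> Zs m k)
           ({None} \<union> Some ` {(m, k). 1 \<le> m \<and> 1 \<le> k \<and> k \<le> Ms m})"
    and "integrable \<nu> norm"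
    and "n \<ge> 1"
    and "G = sigma (space P)
           (\<Union>(m, k)\<in>{(m, k). 1 \<le> m \<and> 1 \<le> k \<and> k \<le> Ms m}.
              {Zs m k -` A \<inter> space P | A. A \<in> sets borel})"
  shows "is_ess_sup P
           {(\<lambda>\<omega>. \<bar>real_cond_exp P G (\<lambda>\<omega>'. F \<omega>' (Z \<omega>')) \<omega> - emp_mean Ms Zs n (F \<omega>) \<omega>\<bar>) | F.
              (\<lambda>(\<omega>, z). F \<omega> z) \<in> borel_measurable (G \<Otimes>\<^sub>M borel) \<and>
              (AE \<omega> in P. lipschitz_on 1 UNIV (F \<omega>))}
           (\<lambda>\<omega>. SUP f\<in>{f :: 'b \<Rightarrow> real. lipschitz_on 1 UNIV f}.
              \<bar>prob_space.expectation P (\<lambda>\<omega>'. f (Z \<omega>')) - emp_mean Ms Zs n f \<omega>\<bar>)"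
proof -
  note P = assms(1)
  interpret prob_space P by fact
  define S where "S = {(m, k). 1 \<le> m \<and> 1 \<le> k \<and> k \<le> Ms m}"
  have iv: "indep_vars (\<lambda>_. borel) (\<lambda>i. case i of None \<Rightarrow> Z | Some (m, k) \<Rightarrow> Zs m k) ({None} \<union> Some ` S)"
    using assms(5) unfolding S_def .
  have Gdef: "G = sigma (space P) (\<Union>(m, k)\<in>S. {Zs m k -` A \<inter> space P | A. A \<in> sets borel})"
    using assms(8) unfolding S_def .
  have rv: "\<forall>i\<in>{None} \<union> Some ` S. (case i of None \<Rightarrow> Z | Some (m, k) \<Rightarrow> Zs m k) \<in> borel_measurable P"
    using iv unfolding indep_vars_def2 by auto
  have Zm: "Z \<in> borel_measurable P" using rv by auto
  have Mpos: "Ms n > 0" using assms(2,7) by auto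
  have Zsm: "Zs n k \<in> borel_measurable P" if "k \<in> {1..Ms n}" for k
    using rv assms(7) that unfolding S_def by force
  note sub = indep_G(1)[OF P iv Gdef]
  note ind = indep_G(2)[OF P iv Gdef]
  have nu: "\<nu> = distr P borel Z" using assms(3) by simp
  have intZ: "integrable P (\<lambda>\<omega>. norm (Z \<omega>))"
    using assms(6) unfolding nu by (subst (asm) integrable_distr_eq[OF Zm]) auto
  define Lip where "Lip = {f :: 'b \<Rightarrow> real. lipschitz_on 1 UNIV f}"
  define q where "q f \<omega> = \<bar>expectation (\<lambda>\<omega>'. f (Z \<omega>')) - emp_mean Ms Zs n f \<omega>\<bar>" for f \<omega>
  define B where "B \<omega> = expectation (\<lambda>\<omega>'. norm (Z \<omega>')) + (\<Sum>k=1..Ms n. norm (Zs n k \<omega>)) / real (Ms n)" for \<omega>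
  have lipint: "integrable P (\<lambda>\<omega>. f (Z \<omega>))" if "f \<in> Lip" for f
  proof (rule Bochner_Integration.integrable_bound)
    show "integrable P (\<lambda>\<omega>. \<bar>f 0\<bar> + norm (Z \<omega>))" using intZ by simp
    show "(\<lambda>\<omega>. f (Z \<omega>)) \<in> borel_measurable P"
      using measurable_compose[OF Zm lip_meas] that unfolding Lip_def by auto
    show "AE \<omega> in P. norm (f (Z \<omega>)) \<le> norm (\<bar>f 0\<bar> + norm (Z \<omega>))"
    proof (rule AE_I2)
      fix \<omega>
      have "\<bar>f (Z \<omega>) - f 0\<bar> \<le> dist (Z \<omega>) 0" using lip_bound[of f "Z \<omega>" 0] that unfolding Lip_def by auto
      then show "norm (f (Z \<omega>)) \<le> norm (\<bar>f 0\<bar> + norm (Z \<omega>))" by (simp add: dist_norm)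
    qed
  qed
  have bnd: "q f \<omega> \<le> B \<omega>" if "f \<in> Lip" for f \<omega>
  proof -
    have "\<bar>expectation (\<lambda>\<omega>'. f (Z \<omega>')) - f x\<bar> \<le> expectation (\<lambda>\<omega>'. norm (Z \<omega>')) + norm x" for x
    proof -
      have "expectation (\<lambda>\<omega>'. f (Z \<omega>')) - f x = expectation (\<lambda>\<omega>'. f (Z \<omega>') - f x)"
        using lipint[OF that] by (simp add: prob_space)
      also have "\<bar>\<dots>\<bar> \<le> expectation (\<lambda>\<omega>'. \<bar>f (Z \<omega>') - f x\<bar>)"
        using integral_norm_bound[of P "\<lambda>\<omega>'. f (Z \<omega>') - f x"] by simp
      also have "\<dots> \<le> expectation (\<lambda>\<omega>'. norm (Z \<omega>') + norm x)"
      proof (rule integral_mono)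
        show "integrable P (\<lambda>\<omega>'. \<bar>f (Z \<omega>') - f x\<bar>)" using lipint[OF that] by simp
        show "integrable P (\<lambda>\<omega>'. norm (Z \<omega>') + norm x)" using intZ by simp
        fix \<omega>' have "\<bar>f (Z \<omega>') - f x\<bar> \<le> dist (Z \<omega>') x" using lip_bound that unfolding Lip_def by auto
        also have "\<dots> \<le> norm (Z \<omega>') + norm x" by (simp add: dist_norm norm_triangle_ineq4)
        finally show "\<bar>f (Z \<omega>') - f x\<bar> \<le> norm (Z \<omega>') + norm x" .
      qed
      also have "\<dots> = expectation (\<lambda>\<omega>'. norm (Z \<omega>')) + norm x" using intZ by (simp add: prob_space)
      finally show ?thesis .
    qed
    then show ?thesis unfolding q_def B_def emp_mean_def
      by (intro mean_bound[OF Mpos])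
  qed
  have bdd: "bdd_above ((\<lambda>f. q f \<omega>) ` A)" if "A \<subseteq> Lip" for A \<omega>
    using bnd that by (intro bdd_aboveI[of _ "B \<omega>"]) auto
  have DDLip: "DD \<subseteq> Lip" unfolding Lip_def using DD_lip by auto
  have qmeas: "q f \<in> borel_measurable P" if "f \<in> Lip" for f
  proof -
    have fm: "f \<in> borel_measurable borel" using that lip_meas unfolding Lip_def by auto
    have "(\<lambda>\<omega>. f (Zs n k \<omega>)) \<in> borel_measurable P" if "k \<in> {1..Ms n}" for k
      using measurable_compose[OF Zsm[OF that] fm] .
    then have "emp_mean Ms Zs n f \<in> borel_measurable P"
      unfolding emp_mean_def[abs_def] by (intro borel_measurable_divide borel_measurable_sum) auto
    then show ?thesis unfolding q_def[abs_def] by measurable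
  qed
  have Weq: "(SUP f\<in>Lip. q f \<omega>) = (SUP f\<in>DD. q f \<omega>)" for \<omega>
  proof (rule antisym)
    show "(SUP f\<in>DD. q f \<omega>) \<le> (SUP f\<in>Lip. q f \<omega>)"
      by (rule cSUP_subset_mono[OF DD_nonempty bdd[OF order_refl] DDLip order_refl])
    show "(SUP f\<in>Lip. q f \<omega>) \<le> (SUP f\<in>DD. q f \<omega>)"
    proof (rule cSUP_least)
      show "Lip \<noteq> {}" using DDLip DD_nonempty by auto
      fix f assume f: "f \<in> Lip"
      then obtain g where g: "\<forall>j. g j \<in> DD" "\<forall>z. (\<lambda>j. g j z) \<longlonglongrightarrow> f z"
        "\<forall>j z. \<bar>g j z - f z\<bar> \<le> 2 * norm z + (2 * norm (dseq 0 :: 'b) + 1)"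
        using lip_approx unfolding Lip_def by blast
      define C where "C = 2 * norm (dseq 0 :: 'b) + 1"
      have gLip: "g j \<in> Lip" for j using g(1) DDLip by auto
      have e: "(\<lambda>j. expectation (\<lambda>\<omega>'. g j (Z \<omega>'))) \<longlonglongrightarrow> expectation (\<lambda>\<omega>'. f (Z \<omega>'))"
      proof (rule integral_dominated_convergence[where w="\<lambda>\<omega>. \<bar>f 0\<bar> + 3 * norm (Z \<omega>) + C"])
        show "(\<lambda>\<omega>'. f (Z \<omega>')) \<in> borel_measurable P" using lipint[OF f] by auto
        show "(\<lambda>\<omega>'. g j (Z \<omega>')) \<in> borel_measurable P" for j using lipint[OF gLip] by auto
        show "integrable P (\<lambda>\<omega>. \<bar>f 0\<bar> + 3 * norm (Z \<omega>) + C)" using intZ by simp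
        show "AE \<omega> in P. (\<lambda>j. g j (Z \<omega>)) \<longlonglongrightarrow> f (Z \<omega>)" using g(2) by simp
        show "AE \<omega> in P. norm (g j (Z \<omega>)) \<le> \<bar>f 0\<bar> + 3 * norm (Z \<omega>) + C" for j
        proof (rule AE_I2)
          fix \<omega>
          have "\<bar>f (Z \<omega>) - f 0\<bar> \<le> dist (Z \<omega>) 0" using lip_bound[of f "Z \<omega>" 0] f unfolding Lip_def by auto
          moreover have "\<bar>g j (Z \<omega>) - f (Z \<omega>)\<bar> \<le> 2 * norm (Z \<omega>) + C" using g(3) unfolding C_def by auto
          ultimately show "norm (g j (Z \<omega>)) \<le> \<bar>f 0\<bar> + 3 * norm (Z \<omega>) + C" by (simp add: dist_norm)
        qed
      qed
      have m: "(\<lambda>j. emp_mean Ms Zs n (g j) \<omega>) \<longlonglongrightarrow> emp_mean Ms Zs n f \<omega>"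
        unfolding emp_mean_def using g(2) Mpos by (intro tendsto_divide tendsto_sum tendsto_const) auto
      have lim: "(\<lambda>j. q (g j) \<omega>) \<longlonglongrightarrow> q f \<omega>"
        unfolding q_def by (intro tendsto_rabs tendsto_diff e m)
      show "q f \<omega> \<le> (SUP f\<in>DD. q f \<omega>)"
      proof (rule LIMSEQ_le_const2[OF lim], intro exI allI impI)
        fix j show "q (g j) \<omega> \<le> (SUP f\<in>DD. q f \<omega>)"
          by (rule cSUP_upper[OF g(1)[rule_format] bdd[OF DDLip]])
      qed
    qed
  qed
  have Wmeas: "(\<lambda>\<omega>. SUP f\<in>Lip. q f \<omega>) \<in> borel_measurable P"
    unfolding Weq
    by (rule borel_measurable_cSUP[OF countable_DD]) (use qmeas DDLip bdd in auto)
  have Fq: "AE \<omega> in P. lipschitz_on 1 UNIV (F \<omega>) \<and>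
      \<bar>real_cond_exp P G (\<lambda>\<omega>'. F \<omega>' (Z \<omega>')) \<omega> - emp_mean Ms Zs n (F \<omega>) \<omega>\<bar> = q (F \<omega>) \<omega>"
    if Fm: "(\<lambda>(\<omega>, z). F \<omega> z) \<in> borel_measurable (G \<Otimes>\<^sub>M borel)"
      and FL: "AE \<omega> in P. lipschitz_on 1 UNIV (F \<omega>)" for F
    using freeze_real[OF P sub Zm ind Fm] FL
  proof eventually_elim
    case (elim \<omega>)
    have FLip: "F \<omega> \<in> Lip" using elim unfolding Lip_def by auto
    have Fb: "F \<omega> \<in> borel_measurable borel" using lip_meas elim by auto
    have int: "integrable (distr P borel Z) (F \<omega>)"
      using lipint[OF FLip] by (subst integrable_distr_eq[OF Zm Fb])
    have "(\<integral>z. F \<omega> z \<partial>(distr P borel Z)) = expectation (\<lambda>\<omega>'. F \<omega> (Z \<omega>'))"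
      by (rule integral_distr[OF Zm Fb])
    then show ?case using elim int unfolding q_def by simp
  qed
  show ?thesis
    unfolding is_ess_sup_def
  proof (intro conjI ballI allI impI)
    show "(\<lambda>\<omega>. SUP f\<in>{f :: 'b \<Rightarrow> real. lipschitz_on 1 UNIV f}.
              \<bar>expectation (\<lambda>\<omega>'. f (Z \<omega>')) - emp_mean Ms Zs n f \<omega>\<bar>) \<in> borel_measurable P"
      using Wmeas unfolding Lip_def q_def .
  next
    fix X assume "X \<in> {(\<lambda>\<omega>. \<bar>real_cond_exp P G (\<lambda>\<omega>'. F \<omega>' (Z \<omega>')) \<omega> - emp_mean Ms Zs n (F \<omega>) \<omega>\<bar>) | F.
              (\<lambda>(\<omega>, z). F \<omega> z) \<in> borel_measurable (G \<Otimes>\<^sub>M borel) \<and>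
              (AE \<omega> in P. lipschitz_on 1 UNIV (F \<omega>))}"
    then obtain F where X: "X = (\<lambda>\<omega>. \<bar>real_cond_exp P G (\<lambda>\<omega>'. F \<omega>' (Z \<omega>')) \<omega> - emp_mean Ms Zs n (F \<omega>) \<omega>\<bar>)"
      and Fm: "(\<lambda>(\<omega>, z). F \<omega> z) \<in> borel_measurable (G \<Otimes>\<^sub>M borel)"
      and FL: "AE \<omega> in P. lipschitz_on 1 UNIV (F \<omega>)" by blast
    show "AE \<omega> in P. X \<omega> \<le> (SUP f\<in>{f :: 'b \<Rightarrow> real. lipschitz_on 1 UNIV f}.
              \<bar>expectation (\<lambda>\<omega>'. f (Z \<omega>')) - emp_mean Ms Zs n f \<omega>\<bar>)"
      using Fq[OF Fm FL]
    proof eventually_elim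
      case (elim \<omega>)
      have FLip: "F \<omega> \<in> Lip" using elim unfolding Lip_def by auto
      have "q (F \<omega>) \<omega> \<le> (SUP f\<in>Lip. q f \<omega>)" by (rule cSUP_upper[OF FLip bdd[OF order_refl]])
      then show ?case using elim unfolding X Lip_def q_def by simp
    qed
  next
    fix Y' :: "'a \<Rightarrow> real"
    assume Y'm: "Y' \<in> borel_measurable P"
    assume up: "\<forall>X\<in>{(\<lambda>\<omega>. \<bar>real_cond_exp P G (\<lambda>\<omega>'. F \<omega>' (Z \<omega>')) \<omega> - emp_mean Ms Zs n (F \<omega>) \<omega>\<bar>) | F.
              (\<lambda>(\<omega>, z). F \<omega> z) \<in> borel_measurable (G \<Otimes>\<^sub>M borel) \<and>
              (AE \<omega> in P. lipschitz_on 1 UNIV (F \<omega>))}. AE \<omega> in P. X \<omega> \<le> Y' \<omega>"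
    have each: "AE \<omega> in P. q f \<omega> \<le> Y' \<omega>" if f: "f \<in> DD" for f
    proof -
      have fL: "lipschitz_on 1 UNIV f" using f DD_lip by auto
      have fb: "f \<in> borel_measurable borel" using lip_meas fL by auto
      have Fm: "(\<lambda>(\<omega>, z). (\<lambda>_. f) \<omega> z) \<in> borel_measurable (G \<Otimes>\<^sub>M borel)"
        using measurable_compose[OF measurable_snd fb] by (simp add: split_beta')
      have FL: "AE \<omega> in P. lipschitz_on 1 UNIV ((\<lambda>_. f) \<omega>)" using fL by simp
      have "AE \<omega> in P. \<bar>real_cond_exp P G (\<lambda>\<omega>'. (\<lambda>_. f) \<omega>' (Z \<omega>')) \<omega> - emp_mean Ms Zs n ((\<lambda>_. f) \<omega>) \<omega>\<bar> \<le> Y' \<omega>"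
      proof -
        have mem: "(\<lambda>\<omega>. \<bar>real_cond_exp P G (\<lambda>\<omega>'. (\<lambda>_. f) \<omega>' (Z \<omega>')) \<omega> - emp_mean Ms Zs n ((\<lambda>_. f) \<omega>) \<omega>\<bar>)
          \<in> {(\<lambda>\<omega>. \<bar>real_cond_exp P G (\<lambda>\<omega>'. F \<omega>' (Z \<omega>')) \<omega> - emp_mean Ms Zs n (F \<omega>) \<omega>\<bar>) | F.
              (\<lambda>(\<omega>, z). F \<omega> z) \<in> borel_measurable (G \<Otimes>\<^sub>M borel) \<and>
              (AE \<omega> in P. lipschitz_on 1 UNIV (F \<omega>))}"
          using Fm FL by (intro CollectI exI[of _ "\<lambda>_. f"]) simp
        show ?thesis using bspec[OF up mem] by simp
      qed
      moreover note Fq[OF Fm FL]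
      ultimately show ?thesis by eventually_elim simp
    qed
    have "AE \<omega> in P. \<forall>f\<in>DD. q f \<omega> \<le> Y' \<omega>"
      by (rule AE_ball_countable'[OF each countable_DD])
    then show "AE \<omega> in P. (SUP f\<in>{f :: 'b \<Rightarrow> real. lipschitz_on 1 UNIV f}.
              \<bar>expectation (\<lambda>\<omega>'. f (Z \<omega>')) - emp_mean Ms Zs n f \<omega>\<bar>) \<le> Y' \<omega>"
    proof eventually_elim
      case (elim \<omega>)
      have "(SUP f\<in>DD. q f \<omega>) \<le> Y' \<omega>" by (rule cSUP_least[OF DD_nonempty]) (use elim in auto)
      then show ?case using Weq[of \<omega>] unfolding Lip_def q_def by simp
    qed
  qed
qed

end
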